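(* Let $R$ be a $\mathbb{C}$-algebra which is a noetherian UFD, let $r,s\in R$ be elements such that the ideal $(r,s)$ has height $2$ and $r,s$ share no common non-unit factor, and let $A_{r,s}:=R[U,V]/(rU-sV-1)$ with $u,v$ the residue classes of $U,V$. Assume: $A_{r,s}$ is a UFD; $A_{r,s}^*=R^*$; $R$ is rigid and $ML(A_{r,s})=R$. Let $E$ be the $R$-derivation of $A_{r,s}$ with $E(u)=s$, $E(v)=r$. Then for every $\mathbb{C}$-algebra automorphism $\varphi$ of $A_{r,s}$ one has $\varphi^{-1}E\varphi=\lambda E$ for some $\lambda\in R^*$.
   Context: A derivation $D$ of a ring $B$ is locally nilpotent if for every $b\in B$ there is $n$ with $D^n(b)=0$; $\operatorname{LND}(B)$ denotes the set of locally nilpotent $\mathbb{C}$-derivations of the $\mathbb{C}$-algebra $B$. The Makar-Limanov invariant $ML(B)$ is the intersection of the kernels of all $D\in\operatorname{LND}(B)$. $B$ is rigid if $\operatorname{LND}(B)=\{0\}$. $B^*$ denotes the unit group. *)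

theory Defs
  imports Complex_Main "HOL-Computational_Algebra.Polynomial" "HOL-Computational_Algebra.Factorial_Ring"
    "HOL-Library.Extended_Nat"
begin

definition rhom :: "('a::comm_ring_1 \<Rightarrow> 'b::comm_ring_1) \<Rightarrow> bool" where
  "rhom f \<longleftrightarrow> f 1 = 1 \<and> (\<forall>x y. f (x + y) = f x + f y) \<and> (\<forall>x y. f (x * y) = f x * f y)"

text \<open>A C-algebra structure on a commutative ring B is a ring homomorphism
  k : complex -> B.\<close>

definition is_ideal :: "'a::comm_ring_1 set \<Rightarrow> bool" where
  "is_ideal I \<longleftrightarrow> 0 \<in> I \<and> (\<forall>x\<in>I. \<forall>y\<in>I. x + y \<in> I) \<and> (\<forall>a. \<forall>x\<in>I. a * x \<in> I)"

definition ideal_of :: "'a::comm_ring_1 set \<Rightarrow> 'a set" where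
  "ideal_of S = \<Inter> {I. is_ideal I \<and> S \<subseteq> I}"

definition noetherian :: "'a::comm_ring_1 itself \<Rightarrow> bool" where
  "noetherian _ \<longleftrightarrow> (\<forall>I::'a set. is_ideal I \<longrightarrow> (\<exists>F. finite F \<and> I = ideal_of F))"

definition prime_ideal :: "'a::comm_ring_1 set \<Rightarrow> bool" where
  "prime_ideal P \<longleftrightarrow> is_ideal P \<and> P \<noteq> UNIV \<and> (\<forall>a b. a * b \<in> P \<longrightarrow> a \<in> P \<or> b \<in> P)"

definition prime_height :: "'a::comm_ring_1 set \<Rightarrow> enat" where
  "prime_height P = Sup {enat n | n. \<exists>c::nat \<Rightarrow> 'a set.
      (\<forall>i\<le>n. prime_ideal (c i)) \<and> (\<forall>i<n. c i \<subset> c (Suc i)) \<and> c n = P}"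

definition ideal_height :: "'a::comm_ring_1 set \<Rightarrow> enat" where
  "ideal_height I = Inf {prime_height P | P. prime_ideal P \<and> I \<subseteq> P}"

text \<open>Irreducible element (same as the library notion, which however needs a stronger sort).\<close>
definition irred :: "'a::idom \<Rightarrow> bool" where
  "irred p \<longleftrightarrow> p \<noteq> 0 \<and> \<not> (p dvd 1) \<and> (\<forall>a b. p = a * b \<longrightarrow> (a dvd 1) \<or> (b dvd 1))"

definition ufd :: "'a::idom itself \<Rightarrow> bool" where
  "ufd _ \<longleftrightarrow>
     (\<forall>x::'a. x \<noteq> 0 \<and> \<not> (x dvd 1) \<longrightarrow>
        (\<exists>xs. xs \<noteq> [] \<and> (\<forall>p\<in>set xs. irred p) \<and> x = prod_list xs)) \<and>
     (\<forall>xs ys :: 'a list. (\<forall>p\<in>set xs. irred p) \<and> (\<forall>p\<in>set ys. irred p)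
        \<and> prod_list xs = prod_list ys \<longrightarrow>
        (\<exists>f. bij_betw f {..<length xs} {..<length ys} \<and>
             (\<forall>i<length xs. xs ! i dvd ys ! (f i) \<and> ys ! (f i) dvd xs ! i)))"

definition is_Cder :: "(complex \<Rightarrow> 'b::comm_ring_1) \<Rightarrow> ('b \<Rightarrow> 'b) \<Rightarrow> bool" where
  "is_Cder k D \<longleftrightarrow> (\<forall>x y. D (x + y) = D x + D y) \<and> (\<forall>c x. D (k c * x) = k c * D x)
     \<and> (\<forall>x y. D (x * y) = x * D y + y * D x)"

definition LND :: "(complex \<Rightarrow> 'b::comm_ring_1) \<Rightarrow> ('b \<Rightarrow> 'b) set" where
  "LND k = {D. is_Cder k D \<and> (\<forall>b. \<exists>n. (D ^^ n) b = 0)}"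

definition makar_limanov :: "(complex \<Rightarrow> 'b::comm_ring_1) \<Rightarrow> 'b set" where
  "makar_limanov k = (\<Inter>D\<in>LND k. {b. D b = 0})"

definition rigid :: "(complex \<Rightarrow> 'b::comm_ring_1) \<Rightarrow> bool" where
  "rigid k \<longleftrightarrow> LND k = {\<lambda>_. 0}"

text \<open>R-derivation of B where j : R -> B is the R-algebra structure.\<close>
definition is_Rder :: "('a::comm_ring_1 \<Rightarrow> 'b::comm_ring_1) \<Rightarrow> ('b \<Rightarrow> 'b) \<Rightarrow> bool" where
  "is_Rder j D \<longleftrightarrow> (\<forall>x y. D (x + y) = D x + D y) \<and> (\<forall>a x. D (j a * x) = j a * D x)
     \<and> (\<forall>x y. D (x * y) = x * D y + y * D x)"

definition C_alg_aut :: "(complex \<Rightarrow> 'b::comm_ring_1) \<Rightarrow> ('b \<Rightarrow> 'b) \<Rightarrow> bool" where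
  "C_alg_aut k \<phi> \<longleftrightarrow> bij \<phi> \<and> rhom \<phi> \<and> (\<forall>c. \<phi> (k c) = k c)"

section \<open>The ring R[U,V] (as 'a poly poly, outer variable U) and the algebra A_{r,s}\<close>

definition varU :: "'a::comm_ring_1 poly poly" where "varU = [:0, 1:]"
definition varV :: "'a::comm_ring_1 poly poly" where "varV = [:[:0, 1:]:]"
definition constUV :: "'a::comm_ring_1 \<Rightarrow> 'a poly poly" where "constUV a = [:[:a:]:]"

text \<open>Evaluation R[U,V] -> B given by j on coefficients, U |-> u, V |-> v.\<close>
definition eval2 :: "('a::comm_ring_1 \<Rightarrow> 'b::comm_ring_1) \<Rightarrow> 'b \<Rightarrow> 'b \<Rightarrow> 'a poly poly \<Rightarrow> 'b" where
  "eval2 j u v p = poly (map_poly (\<lambda>q. poly (map_poly j q) v) p) u"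

text \<open>(B, j, u, v) is a presentation of A_{r,s} = R[U,V]/(rU - sV - 1), u, v the residue classes
  of U, V: the evaluation map is a surjective ring homomorphism with kernel the principal
  ideal (rU - sV - 1).\<close>
definition presents_Ars :: "'a::comm_ring_1 \<Rightarrow> 'a \<Rightarrow> ('a \<Rightarrow> 'b::comm_ring_1) \<Rightarrow> 'b \<Rightarrow> 'b \<Rightarrow> bool" where
  "presents_Ars r s j u v \<longleftrightarrow> rhom j \<and> surj (eval2 j u v) \<and>
     (\<forall>f. eval2 j u v f = 0 \<longleftrightarrow>
        (constUV r * varU - constUV s * varV - 1) dvd f)"

end

theory Submission
  imports Defs
begin

lemma rhom_0: "rhom f \<Longrightarrow> f 0 = 0"
  unfolding rhom_def by (metis add_cancel_right_right add_0)

lemma rhom_minus: "rhom f \<Longrightarrow> f (- x) = - f x"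
  using rhom_0[of f] unfolding rhom_def
  by (metis add.right_inverse add_eq_0_iff2)

lemma rhom_diff: "rhom f \<Longrightarrow> f (x - y) = f x - f y"
  using rhom_minus[of f y] unfolding rhom_def by (metis diff_conv_add_uminus)

lemma aut_inv:
  assumes "C_alg_aut k \<phi>" shows "C_alg_aut k (inv \<phi>)"
proof -
  have b: "bij \<phi>" and h: "rhom \<phi>" and f: "\<forall>c. \<phi> (k c) = k c" using assms by (auto simp: C_alg_aut_def)
  have inj: "inj \<phi>" using b bij_is_inj by auto
  have sj: "\<And>y. \<phi> (inv \<phi> y) = y" using b by (meson bij_is_surj surj_f_inv_f)
  have ii: "\<And>x. inv \<phi> (\<phi> x) = x" using inj by simp
  have "rhom (inv \<phi>)" unfolding rhom_def
  proof (intro conjI allI)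
    show "inv \<phi> 1 = 1" using h ii unfolding rhom_def by (metis)
    fix x y
    have "\<phi> (inv \<phi> x + inv \<phi> y) = x + y" using h sj unfolding rhom_def by simp
    then have "inv \<phi> (\<phi> (inv \<phi> x + inv \<phi> y)) = inv \<phi> (x + y)" by simp
    then show "inv \<phi> (x + y) = inv \<phi> x + inv \<phi> y" using ii by simp
    have "\<phi> (inv \<phi> x * inv \<phi> y) = x * y" using h sj unfolding rhom_def by simp
    then have "inv \<phi> (\<phi> (inv \<phi> x * inv \<phi> y)) = inv \<phi> (x * y)" by simp
    then show "inv \<phi> (x * y) = inv \<phi> x * inv \<phi> y" using ii by simp
  qed
  moreover have "bij (inv \<phi>)" using b bij_imp_bij_inv by blast
  moreover have "\<forall>c. inv \<phi> (k c) = k c" using f ii by metis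
  ultimately show ?thesis by (simp add: C_alg_aut_def)
qed

lemma poly_map_in:
  assumes "f 0 = 0" "\<forall>a. f a \<in> S" "x \<in> S" "0 \<in> S"
    "\<forall>a\<in>S. \<forall>b\<in>S. a + b \<in> S" "\<forall>a\<in>S. \<forall>b\<in>S. a * b \<in> S"
  shows "poly (map_poly f p) x \<in> S"
  by (induction p) (auto simp: map_poly_pCons assms)

lemma gen:
  assumes pres: "presents_Ars r s j u v"
    and S: "range j \<subseteq> S" "u \<in> S" "v \<in> S"
    "\<forall>a\<in>S. \<forall>b\<in>S. a + b \<in> S" "\<forall>a\<in>S. \<forall>b\<in>S. a * b \<in> S"
  shows "x \<in> S"
proof -
  have hj: "rhom j" and su: "surj (eval2 j u v)" using pres by (auto simp: presents_Ars_def)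
  obtain f where x: "x = eval2 j u v f" using su by (metis surjD)
  have j0: "j 0 = 0" using rhom_0[OF hj] .
  have z: "0 \<in> S" using S(1) j0 by (metis rangeI subsetD)
  have ja: "\<forall>a. j a \<in> S" using S(1) by auto
  have g: "\<forall>q. poly (map_poly j q) v \<in> S"
    using poly_map_in[OF j0 ja S(3) z S(4) S(5)] by blast
  show ?thesis unfolding x eval2_def
    by (rule poly_map_in[OF _ g S(2) z S(4) S(5)]) (simp add: j0)
qed

lemma rel:
  assumes pres: "presents_Ars r s j u v"
  shows "j r * u - j s * v = 1"
proof -
  have hj: "rhom j" using pres by (auto simp: presents_Ars_def)
  have "eval2 j u v (constUV r * varU - constUV s * varV - 1) = 0"
    using pres by (auto simp: presents_Ars_def)
  moreover have "constUV r * varU - constUV s * varV - (1::'a poly poly) = [: [:-1, -s:], [:r:] :]"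
    by (simp add: constUV_def varU_def varV_def one_pCons)
  ultimately have "eval2 j u v [: [:-1, -s:], [:r:] :] = 0" by simp
  then show ?thesis
    using rhom_0[OF hj] rhom_minus[OF hj, of 1] rhom_minus[OF hj, of s] hj
    by (simp add: eval2_def map_poly_pCons rhom_def algebra_simps)
qed


lemma LND_conj:
  assumes a: "C_alg_aut k \<psi>" and D: "D \<in> LND k"
  shows "inv \<psi> \<circ> D \<circ> \<psi> \<in> LND k"
proof -
  have ai: "C_alg_aut k (inv \<psi>)" using aut_inv[OF a] .
  have h: "rhom \<psi>" and f: "\<forall>c. \<psi> (k c) = k c" using a by (auto simp: C_alg_aut_def)
  have hi: "rhom (inv \<psi>)" and fi: "\<forall>c. inv \<psi> (k c) = k c" using ai by (auto simp: C_alg_aut_def)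
  have dD: "is_Cder k D" and nD: "\<forall>b. \<exists>n. (D ^^ n) b = 0" using D by (auto simp: LND_def)
  have pw: "((inv \<psi> \<circ> D \<circ> \<psi>) ^^ n) b = inv \<psi> ((D ^^ n) (\<psi> b))" for n b
  proof (induction n arbitrary: b)
    case 0
    have "inj \<psi>" using a by (auto simp: C_alg_aut_def bij_is_inj)
    then show ?case by simp
  next
    case (Suc n)
    have sj: "\<And>y. \<psi> (inv \<psi> y) = y" using a by (meson C_alg_aut_def bij_is_surj surj_f_inv_f)
    have "((inv \<psi> \<circ> D \<circ> \<psi>) ^^ Suc n) b = ((inv \<psi> \<circ> D \<circ> \<psi>) ^^ n) ((inv \<psi> \<circ> D \<circ> \<psi>) b)"
      by (simp add: funpow_Suc_right del: funpow.simps)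
    also have "\<dots> = inv \<psi> ((D ^^ n) (\<psi> ((inv \<psi> \<circ> D \<circ> \<psi>) b)))" by (rule Suc.IH)
    also have "\<dots> = inv \<psi> ((D ^^ Suc n) (\<psi> b))" by (simp add: sj funpow_Suc_right del: funpow.simps)
    finally show ?case .
  qed
  have "is_Cder k (inv \<psi> \<circ> D \<circ> \<psi>)"
  proof -
    have ii: "\<And>x. inv \<psi> (\<psi> x) = x" using a by (auto simp: C_alg_aut_def bij_is_inj)
    have "D (1 * 1) = 1 * D 1 + 1 * D 1" using dD unfolding is_Cder_def by blast
    then have D1: "D 1 = 0" by (simp only: mult_1_left mult_1) (metis add_cancel_right_right)
    have Dk: "D (k c) = 0" for c
    proof -
      have "D (k c * 1) = k c * D 1" using dD unfolding is_Cder_def by blast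
      then show ?thesis using D1 by simp
    qed
    show ?thesis using dD h f hi fi ii Dk rhom_0[OF hi] unfolding is_Cder_def rhom_def by simp
  qed
  moreover have "\<forall>b. \<exists>n. ((inv \<psi> \<circ> D \<circ> \<psi>) ^^ n) b = 0"
  proof
    fix b
    obtain n where "(D ^^ n) (\<psi> b) = 0" using nD by blast
    then have "((inv \<psi> \<circ> D \<circ> \<psi>) ^^ n) b = 0" using pw[of n b] rhom_0[OF hi] by simp
    then show "\<exists>n. ((inv \<psi> \<circ> D \<circ> \<psi>) ^^ n) b = 0" by blast
  qed
  ultimately show ?thesis by (simp add: LND_def)
qed


lemma conj_mult:
  fixes iota :: "complex \<Rightarrow> 'a::idom" and j :: "'a \<Rightarrow> 'b::idom"
  assumes pres: "presents_Ars r s j u v"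
    and ml_A: "makar_limanov (j \<circ> iota) = range j"
    and E_der: "is_Rder j E"
    and E_u: "E u = j s"
    and E_v: "E v = j r"
    and a: "C_alg_aut (j \<circ> iota) \<psi>"
  shows "\<exists>h. \<forall>x. inv \<psi> (E (\<psi> x)) = h * E x"
proof -
  define k where "k = j \<circ> iota"
  have hj: "rhom j" using pres by (auto simp: presents_Ars_def)
  have ai: "C_alg_aut k (inv \<psi>)" using aut_inv a k_def by simp
  have h: "rhom \<psi>" using a by (auto simp: C_alg_aut_def)
  have hi: "rhom (inv \<psi>)" using ai by (auto simp: C_alg_aut_def)
  have sj: "\<And>y. \<psi> (inv \<psi> y) = y" using a by (meson C_alg_aut_def bij_is_surj surj_f_inv_f)
  have Eadd: "\<And>x y. E (x + y) = E x + E y" and Emul: "\<And>x y. E (x * y) = x * E y + y * E x"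
    and Ej: "\<And>a x. E (j a * x) = j a * E x" using E_der by (auto simp: is_Rder_def)
  have E1: "E 1 = 0" using Emul[of 1 1] by (simp only: mult_1_left mult_1) (metis add_cancel_right_right)
  have Eja: "E (j b) = 0" for b using Ej[of b 1] E1 by simp
  have psij: "\<psi> (j a) \<in> range j" for a
  proof -
    have "\<psi> (j a) \<in> makar_limanov k"
      unfolding makar_limanov_def
    proof (intro INT_I CollectI)
      fix D assume D: "D \<in> LND k"
      have "inv \<psi> \<circ> D \<circ> \<psi> \<in> LND k" using LND_conj[OF _ D] a k_def by simp
      moreover have "j a \<in> makar_limanov k" using ml_A k_def by simp
      ultimately have "inv \<psi> (D (\<psi> (j a))) = 0" unfolding makar_limanov_def by auto
      then have "\<psi> (inv \<psi> (D (\<psi> (j a)))) = \<psi> 0" by simp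
      then show "D (\<psi> (j a)) = 0" using sj rhom_0[OF h] by simp
    qed
    then show ?thesis using ml_A k_def by simp
  qed
  define D where "D x = inv \<psi> (E (\<psi> x))" for x
  have Dj: "D (j a) = 0" for a
    using psij[of a] Eja rhom_0[OF hi] unfolding D_def by auto
  have Dadd: "D (x + y) = D x + D y" for x y
    using h hi Eadd unfolding D_def rhom_def by simp
  have Dmul: "D (x * y) = x * D y + y * D x" for x y
  proof -
    have ii: "\<And>x. inv \<psi> (\<psi> x) = x" using a by (auto simp: C_alg_aut_def bij_is_inj)
    show ?thesis using h hi Emul ii unfolding D_def rhom_def by simp
  qed
  have Djm: "D (j a * x) = j a * D x" for a x using Dmul Dj by simp
  have Ddiff: "D (x - y) = D x - D y" for x y
    using Dadd[of "x - y" y] by (simp add: algebra_simps)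
  have D1: "D 1 = 0" using Dmul[of 1 1] by (simp only: mult_1_left mult_1) (metis add_cancel_right_right)
  have rl: "j r * u - j s * v = 1" using rel[OF pres] .
  have "D (j r * u - j s * v) = 0" using rl D1 by simp
  then have eq: "j r * D u = j s * D v" using Ddiff Djm by simp
  define hh where "hh = u * D v - v * D u"
  have Du: "D u = j s * hh"
  proof -
    have "D u = D u * (j r * u - j s * v)" using rl by simp
    also have "\<dots> = u * (j r * D u) - j s * v * D u" by (simp add: algebra_simps)
    also have "\<dots> = u * (j s * D v) - j s * v * D u" using eq by simp
    also have "\<dots> = j s * hh" by (simp add: hh_def algebra_simps)
    finally show ?thesis .
  qed
  have Dv: "D v = j r * hh"
  proof -
    have "D v = D v * (j r * u - j s * v)" using rl by simp
    also have "\<dots> = j r * u * D v - v * (j s * D v)" by (simp add: algebra_simps)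
    also have "\<dots> = j r * u * D v - v * (j r * D u)" using eq by simp
    also have "\<dots> = j r * hh" by (simp add: hh_def algebra_simps)
    finally show ?thesis .
  qed
  have "x \<in> {x. D x = hh * E x}" for x
  proof (rule gen[OF pres])
    show "range j \<subseteq> {x. D x = hh * E x}" using Dj Eja by auto
    show "u \<in> {x. D x = hh * E x}" using Du E_u by (simp add: mult.commute)
    show "v \<in> {x. D x = hh * E x}" using Dv E_v by (simp add: mult.commute)
    show "\<forall>a\<in>{x. D x = hh * E x}. \<forall>b\<in>{x. D x = hh * E x}. a + b \<in> {x. D x = hh * E x}"
      using Dadd Eadd by (simp add: algebra_simps)
    show "\<forall>a\<in>{x. D x = hh * E x}. \<forall>b\<in>{x. D x = hh * E x}. a * b \<in> {x. D x = hh * E x}"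
      using Dmul Emul by (simp add: algebra_simps)
  qed
  then show ?thesis unfolding D_def by blast
qed


theorem mainTheorem5:
  fixes iota :: "complex \<Rightarrow> 'a::idom"
    and r s :: 'a
    and j :: "'a \<Rightarrow> 'b::idom"
    and u v :: 'b
    and E :: "'b \<Rightarrow> 'b"
  assumes C_alg: "rhom iota"
    and noeth: "noetherian TYPE('a)"
    and ufd_R: "ufd TYPE('a)"
    and height: "ideal_height (ideal_of {r, s}) = 2"
    and coprime: "\<forall>d. d dvd r \<and> d dvd s \<longrightarrow> (d dvd 1)"
    and pres: "presents_Ars r s j u v"
    and ufd_A: "ufd TYPE('b)"
    and units: "{x::'b. (x dvd 1)} = j ` {a. (a dvd 1)}"
    and rigid_R: "rigid iota"
    and ml_A: "makar_limanov (j \<circ> iota) = range j"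
    and E_der: "is_Rder j E"
    and E_u: "E u = j s"
    and E_v: "E v = j r"
  shows "\<forall>\<phi>. C_alg_aut (j \<circ> iota) \<phi> \<longrightarrow>
           (\<exists>l. (l dvd 1) \<and> inv \<phi> \<circ> E \<circ> \<phi> = (\<lambda>x. j l * E x))"
proof (intro allI impI)
  fix \<phi> assume a: "C_alg_aut (j \<circ> iota) \<phi>"
  obtain h where h: "\<forall>x. inv \<phi> (E (\<phi> x)) = h * E x"
    using conj_mult[OF pres ml_A E_der E_u E_v a] by blast
  have ai: "C_alg_aut (j \<circ> iota) (inv \<phi>)" using aut_inv[OF a] .
  obtain h' where h': "\<forall>x. inv (inv \<phi>) (E (inv \<phi> x)) = h' * E x"
    using conj_mult[OF pres ml_A E_der E_u E_v ai] by blast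
  have b: "bij \<phi>" and hp: "rhom \<phi>" using a by (auto simp: C_alg_aut_def)
  have hi: "rhom (inv \<phi>)" using ai by (auto simp: C_alg_aut_def)
  have ii: "inv (inv \<phi>) = \<phi>" using b by (simp add: inv_inv_eq)
  have sj: "\<And>y. \<phi> (inv \<phi> y) = y" using b by (meson bij_is_surj surj_f_inv_f)
  have ij: "\<And>y. inv \<phi> (\<phi> y) = y" using b by (simp add: bij_is_inj)
  have key: "E x = \<phi> h * h' * E x" for x
  proof -
    have "E x = \<phi> (inv \<phi> (E (\<phi> (inv \<phi> x))))" using sj by simp
    also have "\<dots> = \<phi> (h * E (inv \<phi> x))" using h by simp
    also have "\<dots> = \<phi> h * \<phi> (E (inv \<phi> x))" using hp by (simp add: rhom_def)
    also have "\<dots> = \<phi> h * (h' * E x)" using h' ii by simp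
    finally show ?thesis by (simp add: mult.assoc)
  qed
  have "\<exists>x0. E x0 \<noteq> 0"
  proof (rule ccontr)
    assume "\<not> (\<exists>x0. E x0 \<noteq> 0)"
    then have "j s = 0" "j r = 0" using E_u E_v by auto
    then show False using rel[OF pres] by simp
  qed
  then obtain x0 where x0: "E x0 \<noteq> 0" by blast
  have "E x0 * (\<phi> h * h' - 1) = 0" using key[of x0] by (simp add: algebra_simps)
  then have p1: "\<phi> h * h' = 1" using x0 by simp
  have "h * inv \<phi> h' = 1"
  proof -
    have "h * inv \<phi> h' = inv \<phi> (\<phi> h) * inv \<phi> h'" using ij by simp
    also have "\<dots> = inv \<phi> (\<phi> h * h')" using hi by (simp add: rhom_def)
    also have "\<dots> = 1" using p1 hi by (simp add: rhom_def)
    finally show ?thesis .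
  qed
  then have "h dvd 1" by (metis dvdI)
  then have "h \<in> {x::'b. x dvd 1}" by simp
  then have "h \<in> j ` {a. a dvd 1}" using units by simp
  then obtain l where l: "l dvd 1" "h = j l" by blast
  show "\<exists>l. (l dvd 1) \<and> inv \<phi> \<circ> E \<circ> \<phi> = (\<lambda>x. j l * E x)"
    using l h by (intro exI[of _ l]) auto
qed

end
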